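(* Every line of $\mathrm{PG}(3,q)$ that has at least one point in common with $\mathcal{C}$ (equivalently, every line $\delta_3(\mathcal{K}_1)\cap\delta_3(\mathcal{K}_2)$ arising from a pencil of cubics $\mathcal{P}(\mathcal{K}_1,\mathcal{K}_2)$ on $\mathrm{PG}(1,q)$ with nonempty base locus) belongs to $\mathcal{L}_2\cup\mathcal{L}_3\cup\mathcal{L}_6\cup\mathcal{L}_7\cup\mathcal{L}_8$.
   Context: Let $q$ be a power of a prime $p\neq 2,3$. In $\mathrm{PG}(3,q)$ with coordinates $(Y_0,\dots,Y_3)$, the twisted cubic is $\mathcal{C}=\{(1,t,t^2,t^3):t\in\mathbb{F}_q\}\cup\{(0,0,0,1)\}$, the image of $\nu_3:(x_0,x_1)\mapsto(x_0^3,x_0^2x_1,x_0x_1^2,x_1^3)$. $G\le \mathrm{PGL}(4,q)$ is the image of $\mathrm{PGL}(2,q)$ under the map sending the matrix $\begin{pmatrix}a&b\\c&d\end{pmatrix}$ to $\begin{pmatrix} a^3&a^2b&ab^2&b^3\\ 3a^2c&a^2d+2abc&b^2c+2abd&3b^2d\\ 3ac^2&bc^2+2acd&ad^2+2bcd&3bd^2\\ c^3&c^2d&cd^2&d^3\end{pmatrix}$. Osculating planes: $\Pi(t):-t^3Y_0+3t^2Y_1-3tY_2+Y_3=0$, $\Pi(\infty):Y_0=0$. Tangent line at $P\in\mathcal{C}$: the line through $P$ meeting $\mathcal{C}$ with multiplicity two at $P$. The polarity $\sigma$ maps $(y_0,y_1,y_2,y_3)$ to the plane $-y_3Y_0+3y_2Y_1-3y_1Y_2+y_0Y_3=0$;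 for a line $\ell$, $\ell^\sigma=\bigcap_{P\in\ell}P^\sigma$. A cubic on $\mathrm{PG}(1,q)$ is $\mathcal{Z}(f)$ for a binary cubic form $f=y_{30}X_0^3+y_{21}X_0^2X_1+y_{12}X_0X_1^2+y_{03}X_1^3$, and $\delta_3(\mathcal{Z}(f))$ is the plane $y_{30}Y_0+y_{21}Y_1+y_{12}Y_2+y_{03}Y_3=0$; the pencil $\mathcal{P}(\mathcal{Z}(f_1),\mathcal{Z}(f_2))$ consists of the cubics $\mathcal{Z}(\alpha f_1+\beta f_2)$, with base locus $\mathcal{Z}(f_1)\cap\mathcal{Z}(f_2)$. Orbits: $\mathcal{L}_2$ = tangent lines of $\mathcal{C}$; $\mathcal{L}_3$ = non-tangent lines meeting $\mathcal{C}$ in exactly one point and contained in an osculating plane; $\mathcal{L}_6$ = lines joining two distinct points of $\mathcal{C}$; $\mathcal{L}_7=\{\ell^\sigma:\ell\in\mathcal{L}_4\}$ where $\mathcal{L}_4$ is the $G$-orbit of the line $Y_0=Y_2-Y_3=0$; $\mathcal{L}_8=\{\ell^\sigma:\ell\in\mathcal{L}_5\}$ where $\mathcal{L}_5$ is the $G$-orbit of the line $Y_3-3uY_2+3u^2Y_1-u^3Y_0=Y_1-Y_2=0$ for some $u\in\mathbb{F}_q$ with $u^2-u+1$ a non-square. *)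

theory Defs
  imports Main
begin

text \<open>Points of PG(3,q) are represented by homogeneous coordinate vectors
  (Y0,Y1,Y2,Y3) over a finite field 'a; lines are 2-dimensional subspaces
  of 'a^4, represented as sets of coordinate vectors.\<close>

type_synonym 'a pt = "'a \<times> 'a \<times> 'a \<times> 'a"

definition padd :: "'a::field pt \<Rightarrow> 'a pt \<Rightarrow> 'a pt" where
  "padd = (\<lambda>(x0,x1,x2,x3) (y0,y1,y2,y3). (x0+y0, x1+y1, x2+y2, x3+y3))"

definition psmult :: "'a::field \<Rightarrow> 'a pt \<Rightarrow> 'a pt" where
  "psmult c = (\<lambda>(x0,x1,x2,x3). (c*x0, c*x1, c*x2, c*x3))"

definition span2 :: "'a::field pt \<Rightarrow> 'a pt \<Rightarrow> 'a pt set" where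
  "span2 u v = {padd (psmult s u) (psmult t v) | s t. True}"

definition indep2 :: "'a::field pt \<Rightarrow> 'a pt \<Rightarrow> bool" where
  "indep2 u v \<longleftrightarrow> (\<forall>s t. padd (psmult s u) (psmult t v) = (0,0,0,0) \<longrightarrow> s = 0 \<and> t = 0)"

definition is_line :: "'a::field pt set \<Rightarrow> bool" where
  "is_line l \<longleftrightarrow> (\<exists>u v. indep2 u v \<and> l = span2 u v)"

text \<open>Points of the twisted cubic, parametrised by PG(1,q) = 'a option
  (None = the parameter \<infinity>).\<close>
fun cpt :: "'a::field option \<Rightarrow> 'a pt" where
  "cpt None = (0,0,0,1)"
| "cpt (Some t) = (1, t, t^2, t^3)"

text \<open>Tangent line at a point of C: spanned by the point and the derivative
  of the parametrisation.\<close>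
fun tangent_line :: "'a::field option \<Rightarrow> 'a pt set" where
  "tangent_line None = span2 (0,0,0,1) (0,0,1,0)"
| "tangent_line (Some t) = span2 (1, t, t^2, t^3) (0, 1, 2*t, 3*t^2)"

fun osc_coef :: "'a::field option \<Rightarrow> 'a pt" where
  "osc_coef None = (1,0,0,0)"
| "osc_coef (Some t) = (-(t^3), 3*t^2, -(3*t), 1)"

definition plane_of :: "'a::field pt \<Rightarrow> 'a pt set" where
  "plane_of c = {y. (case c of (c0,c1,c2,c3) \<Rightarrow> case y of (y0,y1,y2,y3) \<Rightarrow>
                      c0*y0 + c1*y1 + c2*y2 + c3*y3) = 0}"

definition sigma_form :: "'a::field pt \<Rightarrow> 'a pt \<Rightarrow> 'a" where
  "sigma_form = (\<lambda>(y0,y1,y2,y3) (Y0,Y1,Y2,Y3). - y3*Y0 + 3*y2*Y1 - 3*y1*Y2 + y0*Y3)"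

definition polar :: "'a::field pt set \<Rightarrow> 'a pt set" where
  "polar l = {Y. \<forall>y\<in>l. sigma_form y Y = 0}"

text \<open>The action of the element of G induced by [[a,b],[c,d]] on points
  (row vectors y, y \<mapsto> y M, which is the action preserving C).\<close>
definition gact :: "'a::field \<Rightarrow> 'a \<Rightarrow> 'a \<Rightarrow> 'a \<Rightarrow> 'a pt \<Rightarrow> 'a pt" where
  "gact a b c d = (\<lambda>(y0,y1,y2,y3).
     (a^3*y0 + 3*a^2*c*y1 + 3*a*c^2*y2 + c^3*y3,
      a^2*b*y0 + (a^2*d + 2*a*b*c)*y1 + (b*c^2 + 2*a*c*d)*y2 + c^2*d*y3,
      a*b^2*y0 + (b^2*c + 2*a*b*d)*y1 + (a*d^2 + 2*b*c*d)*y2 + c*d^2*y3,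
      b^3*y0 + 3*b^2*d*y1 + 3*b*d^2*y2 + d^3*y3))"

definition Gorbit :: "'a::field pt set \<Rightarrow> 'a pt set set" where
  "Gorbit l = {gact a b c d ` l | a b c d. a*d - b*c \<noteq> 0}"

definition L2 :: "'a::field pt set set" where
  "L2 = range tangent_line"

definition L3 :: "'a::field pt set set" where
  "L3 = {l. is_line l \<and> l \<notin> L2 \<and> card {t. cpt t \<in> l} = 1 \<and>
            (\<exists>t. l \<subseteq> plane_of (osc_coef t))}"

definition L6 :: "'a::field pt set set" where
  "L6 = {span2 (cpt s) (cpt t) | s t. s \<noteq> t}"

definition L4 :: "'a::field pt set set" where
  "L4 = Gorbit {(y0,y1,y2,y3). y0 = 0 \<and> y2 - y3 = 0}"

definition L5 :: "'a::field \<Rightarrow> 'a pt set set" where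
  "L5 u = Gorbit {(y0,y1,y2,y3). y3 - 3*u*y2 + 3*u^2*y1 - u^3*y0 = 0 \<and> y1 - y2 = 0}"

definition L7 :: "'a::field pt set set" where
  "L7 = polar ` L4"

definition L8 :: "'a::field \<Rightarrow> 'a pt set set" where
  "L8 u = polar ` L5 u"

end

theory Submission
  imports Defs
begin



lemma padd_simp[simp]: "padd (x0,x1,x2,x3) (y0,y1,y2,y3) = (x0+y0, x1+y1, x2+y2, x3+y3)"
  by (simp add: padd_def)
lemma psmult_simp[simp]: "psmult c (x0,x1,x2,x3) = (c*x0, c*x1, c*x2, c*x3)"
  by (simp add: psmult_def)

lemma gact_simp: "gact a b c d (y0,y1,y2,y3) =
     (a^3*y0 + 3*a^2*c*y1 + 3*a*c^2*y2 + c^3*y3,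
      a^2*b*y0 + (a^2*d + 2*a*b*c)*y1 + (b*c^2 + 2*a*c*d)*y2 + c^2*d*y3,
      a*b^2*y0 + (b^2*c + 2*a*b*d)*y1 + (a*d^2 + 2*b*c*d)*y2 + c*d^2*y3,
      b^3*y0 + 3*b^2*d*y1 + 3*b*d^2*y2 + d^3*y3)"
  by (simp add: gact_def)

lemma gact_lin: "gact a b c d (padd (psmult s x) (psmult t y)) =
   padd (psmult s (gact a b c d x)) (psmult t (gact a b c d y))"
  by (cases x; cases y) (simp add: gact_simp algebra_simps)

lemma gact_comp: "gact a b c d (gact a' b' c' d' y) =
   gact (a'*a+b'*c) (a'*b+b'*d) (c'*a+d'*c) (c'*b+d'*d) y"
proof -
  obtain y0 y1 y2 y3 where y: "y = (y0,y1,y2,y3)" by (cases y) auto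
  show ?thesis unfolding y gact_simp prod.inject
    by (intro conjI; algebra)
qed

lemma gact_scal: "gact k 0 0 k y = psmult (k^3) y"
proof -
  obtain y0 y1 y2 y3 where y: "y = (y0,y1,y2,y3)" by (cases y) auto
  show ?thesis unfolding y gact_simp psmult_simp prod.inject
    by (simp add: power2_eq_square power3_eq_cube)
qed

lemma gact_id: "gact 1 0 0 1 y = y"
  using gact_scal[of 1 y] by (cases y) simp

lemma sigma_inv: "sigma_form (gact a b c d y) (gact a b c d Y) = (a*d-b*c)^3 * sigma_form y Y"
proof -
  obtain y0 y1 y2 y3 where y: "y = (y0,y1,y2,y3)" by (cases y) auto
  obtain z0 z1 z2 z3 where z: "Y = (z0,z1,z2,z3)" by (cases Y) auto
  show ?thesis unfolding y z gact_simp sigma_form_def prod.case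
    by algebra
qed




lemma span2_iff: "z \<in> span2 u v \<longleftrightarrow> (\<exists>s t. z = padd (psmult s u) (psmult t v))"
  by (auto simp: span2_def)

lemma comb_comb: "padd (psmult s (padd (psmult a u) (psmult b v))) (psmult t (padd (psmult c u) (psmult d v)))
   = padd (psmult (s*a+t*c) u) (psmult (s*b+t*d) v)"
  by (cases u; cases v) (simp add: algebra_simps)

lemma comb_zero: "padd (psmult 0 u) (psmult 0 v) = (0,0,0,0)"
  by (cases u; cases v) simp

lemma comb_one: "padd (psmult 1 u) (psmult 0 v) = u" "padd (psmult 0 u) (psmult 1 v) = v"
  by (cases u; cases v; simp)+

lemma span_sub: assumes "x \<in> span2 u v" "y \<in> span2 u v" shows "span2 x y \<subseteq> span2 u v"
proof
  fix z assume "z \<in> span2 x y"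
  then obtain s t where z: "z = padd (psmult s x) (psmult t y)" by (auto simp: span2_iff)
  obtain a b where x: "x = padd (psmult a u) (psmult b v)" using assms by (auto simp: span2_iff)
  obtain c d where y: "y = padd (psmult c u) (psmult d v)" using assms by (auto simp: span2_iff)
  show "z \<in> span2 u v" unfolding z x y comb_comb span2_iff by blast
qed

lemma mem_span_left: "u \<in> span2 u v" and mem_span_right: "v \<in> span2 u v"
  unfolding span2_iff using comb_one by metis+

lemma span_eq: assumes ind: "indep2 x y" and "x \<in> span2 u v" "y \<in> span2 u v"
  shows "span2 x y = span2 u v"
proof
  show "span2 x y \<subseteq> span2 u v" using assms span_sub by blast
  obtain a b where x: "x = padd (psmult a u) (psmult b v)" using assms by (auto simp: span2_iff)
  obtain c d where y: "y = padd (psmult c u) (psmult d v)" using assms by (auto simp: span2_iff)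
  show "span2 u v \<subseteq> span2 x y"
  proof (cases "a*d - b*c = 0")
    case True
    have "padd (psmult d x) (psmult (-b) y) = (0,0,0,0)"
      unfolding x y comb_comb using True by (simp add: algebra_simps comb_zero)
    then have db: "d = 0 \<and> -b = 0" using ind unfolding indep2_def by blast
    have "padd (psmult (-c) x) (psmult a y) = (0,0,0,0)"
      unfolding x y comb_comb using True by (simp add: algebra_simps comb_zero)
    then have ca: "-c = 0 \<and> a = 0" using ind unfolding indep2_def by blast
    have "padd (psmult 1 x) (psmult 0 y) = (0,0,0,0)"
      unfolding x using db ca by (cases y) (simp add: comb_zero comb_one)
    then have False using ind unfolding indep2_def by (metis one_neq_zero)
    then show ?thesis by blast
  next
    case False
    define D where "D = a*d - b*c"
    have D: "D \<noteq> 0" using False D_def by simp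
    have "d/D*a + -b/D*c = (a*d - b*c)/D" by (simp add: diff_divide_distrib algebra_simps)
    then have e1: "d/D*a + -b/D*c = 1" "d/D*b + -b/D*d = 0" using D D_def by auto
    have "padd (psmult (d/D) x) (psmult (-b/D) y) = u"
      unfolding x y comb_comb e1 comb_one ..
    then have "u \<in> span2 x y" unfolding span2_iff by metis
    moreover have "-c/D*b + a/D*d = (a*d - b*c)/D" by (simp add: diff_divide_distrib algebra_simps)
    then have e2: "-c/D*a + a/D*c = 0" "-c/D*b + a/D*d = 1" using D D_def by auto
    have "padd (psmult (-c/D) x) (psmult (a/D) y) = v"
      unfolding x y comb_comb e2 comb_one ..
    then have "v \<in> span2 x y" unfolding span2_iff by metis
    ultimately show ?thesis using span_sub by blast
  qed
qed




lemma img_span: "gact a b c d ` span2 x y = span2 (gact a b c d x) (gact a b c d y)"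
proof
  show "gact a b c d ` span2 x y \<subseteq> span2 (gact a b c d x) (gact a b c d y)"
  proof
    fix z assume "z \<in> gact a b c d ` span2 x y"
    then obtain w where w: "w \<in> span2 x y" "z = gact a b c d w" by blast
    then obtain s t where "w = padd (psmult s x) (psmult t y)" unfolding span2_iff by blast
    then have "z = padd (psmult s (gact a b c d x)) (psmult t (gact a b c d y))" using w by (simp add: gact_lin)
    then show "z \<in> span2 (gact a b c d x) (gact a b c d y)" unfolding span2_iff by blast
  qed
  show "span2 (gact a b c d x) (gact a b c d y) \<subseteq> gact a b c d ` span2 x y"
  proof
    fix z assume "z \<in> span2 (gact a b c d x) (gact a b c d y)"
    then obtain s t where "z = padd (psmult s (gact a b c d x)) (psmult t (gact a b c d y))"
      unfolding span2_iff by blast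
    then have "z = gact a b c d (padd (psmult s x) (psmult t y))" by (simp add: gact_lin)
    moreover have "padd (psmult s x) (psmult t y) \<in> span2 x y" unfolding span2_iff by blast
    ultimately show "z \<in> gact a b c d ` span2 x y" by (rule image_eqI)
  qed
qed

lemma padd_z: "padd (psmult k z) (psmult 0 w) = psmult k z"
  by (cases z; cases w) simp

lemma gact_smult: "gact a b c d (psmult k y) = psmult k (gact a b c d y)"
  using gact_lin[of a b c d k y 0 y] by (metis padd_z)

lemma smult_smult: "psmult k (psmult m y) = psmult (k*m) y"
  by (cases y) (simp add: algebra_simps)

lemma smult_one: "psmult 1 y = y"
  by (cases y) simp

lemma gact_inv: assumes "a*d-b*c \<noteq> 0"
  shows "gact a b c d (psmult (1/(a*d-b*c)^3) (gact d (-b) (-c) a Y)) = Y"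
proof -
  have "gact a b c d (gact d (-b) (-c) a Y) = gact (a*d-b*c) 0 0 (a*d-b*c) Y"
    unfolding gact_comp by (simp add: algebra_simps)
  also have "\<dots> = psmult ((a*d-b*c)^3) Y" by (rule gact_scal)
  finally show ?thesis using assms by (simp add: gact_smult smult_smult smult_one)
qed

lemma polar_img: assumes det: "a*d-b*c \<noteq> 0"
  shows "polar (gact a b c d ` m) = gact a b c d ` polar m"
proof
  show "gact a b c d ` polar m \<subseteq> polar (gact a b c d ` m)"
    by (auto simp: polar_def sigma_inv)
  show "polar (gact a b c d ` m) \<subseteq> gact a b c d ` polar m"
  proof
    fix Y assume Y: "Y \<in> polar (gact a b c d ` m)"
    define Z where "Z = psmult (1/(a*d-b*c)^3) (gact d (-b) (-c) a Y)"
    have gZ: "gact a b c d Z = Y" unfolding Z_def using gact_inv[OF det] .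
    have "Z \<in> polar m" unfolding polar_def
    proof
      show "\<forall>y\<in>m. sigma_form y Z = 0"
      proof
        fix y assume "y \<in> m"
        then have "sigma_form (gact a b c d y) (gact a b c d Z) = 0" using Y gZ by (auto simp: polar_def)
        then show "sigma_form y Z = 0" using det by (simp add: sigma_inv)
      qed
    qed
    then show "Y \<in> gact a b c d ` polar m" using gZ by blast
  qed
qed

lemma img_img: "gact a b c d ` gact a' b' c' d' ` S =
   gact (a'*a+b'*c) (a'*b+b'*d) (c'*a+d'*c) (c'*b+d'*d) ` S"
  by (simp add: image_image gact_comp)

lemma det_comp: "((a'::'a::field)*a+b'*c)*(c'*b+d'*d) - (a'*b+b'*d)*(c'*a+d'*c) = (a'*d'-b'*c')*(a*d-b*c)"
  by algebra

lemma Gorbit_polar_closed: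
  assumes "l \<in> polar ` Gorbit L0" "a*d-b*c \<noteq> 0"
  shows "gact a b c d ` l \<in> polar ` Gorbit L0"
proof -
  obtain a' b' c' d' where l: "l = polar (gact a' b' c' d' ` L0)" and d': "a'*d'-b'*c' \<noteq> 0"
    using assms(1) by (auto simp: Gorbit_def)
  have "gact a b c d ` l = polar (gact a b c d ` gact a' b' c' d' ` L0)"
    unfolding l using polar_img[OF assms(2)] by simp
  also have "\<dots> = polar (gact (a'*a+b'*c) (a'*b+b'*d) (c'*a+d'*c) (c'*b+d'*d) ` L0)"
    by (simp add: img_img)
  finally have e: "gact a b c d ` l = polar (gact (a'*a+b'*c) (a'*b+b'*d) (c'*a+d'*c) (c'*b+d'*d) ` L0)" .
  have "(a'*a+b'*c)*(c'*b+d'*d) - (a'*b+b'*d)*(c'*a+d'*c) \<noteq> 0"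
    using d' assms(2) det_comp[of a' a b' c c' b d' d] by simp
  then have "gact (a'*a+b'*c) (a'*b+b'*d) (c'*a+d'*c) (c'*b+d'*d) ` L0 \<in> Gorbit L0"
    unfolding Gorbit_def by blast
  then show ?thesis unfolding e by (rule imageI)
qed

lemma Gorbit_id: "polar L0 \<in> polar ` Gorbit L0"
proof -
  have "L0 = gact 1 0 0 1 ` L0" by (simp add: gact_id)
  then show ?thesis unfolding Gorbit_def by (intro imageI) force
qed




lemma polar_L0: assumes "(3::'a::field) \<noteq> 0"
  shows "polar {(y0,y1,y2,y3::'a). y0 = 0 \<and> y2 - y3 = 0} = span2 (0,0,0,1) (1, 1/3, 0, 0)"
proof
  show "span2 (0,0,0,1) (1, 1/3, 0, 0) \<subseteq> polar {(y0,y1,y2,y3::'a). y0 = 0 \<and> y2 - y3 = 0}"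
    using assms by (auto simp: span2_def polar_def sigma_form_def)
  show "polar {(y0,y1,y2,y3::'a). y0 = 0 \<and> y2 - y3 = 0} \<subseteq> span2 (0,0,0,1) (1, 1/3, 0, 0)"
  proof
    fix Y :: "'a pt" assume Y: "Y \<in> polar {(y0,y1,y2,y3::'a). y0 = 0 \<and> y2 - y3 = 0}"
    obtain Y0 Y1 Y2 Y3 where YY: "Y = (Y0,Y1,Y2,Y3)" by (cases Y) auto
    have "sigma_form (0,1,0,0) Y = 0" "sigma_form (0,0,1,1) Y = 0" using Y by (auto simp: polar_def)
    then have "Y2 = 0" "Y0 = 3*Y1" using assms by (auto simp: YY sigma_form_def)
    then have "Y = padd (psmult Y3 (0,0,0,1)) (psmult (3*Y1) (1,1/3,0,0))"
      using assms by (simp add: YY)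
    then show "Y \<in> span2 (0,0,0,1) (1, 1/3, 0, 0)" unfolding span2_iff by blast
  qed
qed

lemma polar_L5: assumes three: "(3::'a::field) \<noteq> 0" shows
  "polar {(y0,y1,y2,y3::'a::field). y3 - 3*u*y2 + 3*u^2*y1 - u^3*y0 = 0 \<and> y1 - y2 = 0}
     = span2 (0,1,1,0) (1,0,u^2-u,u^3)"
proof
  show "span2 (0,1,1,0) (1,0,u^2-u,u^3) \<subseteq>
     polar {(y0,y1,y2,y3::'a::field). y3 - 3*u*y2 + 3*u^2*y1 - u^3*y0 = 0 \<and> y1 - y2 = 0}"
  proof
    fix Y assume "Y \<in> span2 (0,1,1,0) ((1::'a),0,u^2-u,u^3)"
    then obtain s t where Y: "Y = (t, s, s + t*(u^2-u), t*u^3)" by (auto simp: span2_def algebra_simps)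
    show "Y \<in> polar {(y0,y1,y2,y3::'a::field). y3 - 3*u*y2 + 3*u^2*y1 - u^3*y0 = 0 \<and> y1 - y2 = 0}"
      unfolding polar_def
    proof (clarify)
      fix y0 y1 y2 y3 assume h: "y3 - 3*u*y2 + 3*u^2*y1 - u^3*y0 = 0" "y1 - y2 = 0"
      have e2: "y2 = y1" using h by simp
      have e3: "y3 = 3*u*y1 - 3*u^2*y1 + u^3*y0" using h e2 by (simp add: algebra_simps)
      show "sigma_form (y0,y1,y2,y3) Y = 0" unfolding Y sigma_form_def e2 e3 prod.case
        by algebra
    qed
  qed
  show "polar {(y0,y1,y2,y3::'a::field). y3 - 3*u*y2 + 3*u^2*y1 - u^3*y0 = 0 \<and> y1 - y2 = 0}
     \<subseteq> span2 (0,1,1,0) (1,0,u^2-u,u^3)"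
  proof
    fix Y :: "'a pt" assume Y: "Y \<in> polar {(y0,y1,y2,y3::'a::field). y3 - 3*u*y2 + 3*u^2*y1 - u^3*y0 = 0 \<and> y1 - y2 = 0}"
    obtain Y0 Y1 Y2 Y3 where YY: "Y = (Y0,Y1,Y2,Y3)" by (cases Y) auto
    have m1: "(1,0,0,u^3) \<in> {(y0,y1,y2,y3::'a::field). y3 - 3*u*y2 + 3*u^2*y1 - u^3*y0 = 0 \<and> y1 - y2 = 0}"
      by simp
    have m2: "(0,1,1,3*u-3*u^2) \<in> {(y0,y1,y2,y3::'a::field). y3 - 3*u*y2 + 3*u^2*y1 - u^3*y0 = 0 \<and> y1 - y2 = 0}"
      by simp
    have "sigma_form (1,0,0,u^3) Y = 0" "sigma_form (0,1,1,3*u-3*u^2) Y = 0"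
      using Y m1 m2 unfolding polar_def by blast+
    then have e: "Y3 = u^3*Y0" "3*Y2 = 3*Y1 - (3*u-3*u^2)*Y0" by (auto simp: YY sigma_form_def algebra_simps)
    have "3*Y2 = 3*(Y1 - (u-u^2)*Y0)" using e by (simp add: algebra_simps)
    then have "Y2 = Y1 - (u-u^2)*Y0" by (rule mult_left_cancel[THEN iffD1, OF three])
    then have "Y2 = Y1 + Y0*(u^2-u)" by (simp add: algebra_simps)
    then have "Y = padd (psmult Y1 (0,1,1,0)) (psmult Y0 (1,0,u^2-u,u^3))"
      using e by (simp add: YY algebra_simps)
    then show "Y \<in> span2 (0,1,1,0) (1,0,u^2-u,u^3)" unfolding span2_iff by blast
  qed
qed




lemma indep_Pinf: "indep2 (0,0,0,1) (1,x,y,0)"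
  unfolding indep2_def by simp

lemma stab: assumes d: "d \<noteq> 0"
  shows "gact 1 b 0 d ` span2 (0,0,0,1) (1,x1,y1,0) =
         span2 (0,0,0,1) (1, b + d*x1, b^2 + 2*b*d*x1 + d^2*y1, 0)"
proof -
  define z where "z = b^3 + 3*b^2*d*x1 + 3*b*d^2*y1"
  have g1: "gact 1 b 0 d (0,0,0,1) = psmult (d^3) (0,0,0,1)" by (simp add: gact_simp)
  have g2: "gact 1 b 0 d (1,x1,y1,0) = (1, b + d*x1, b^2 + 2*b*d*x1 + d^2*y1, z)"
    by (simp add: gact_simp z_def algebra_simps)
  have "span2 (0,0,0,1) (1, b + d*x1, b^2 + 2*b*d*x1 + d^2*y1, 0) =
        span2 (gact 1 b 0 d (0,0,0,1)) (gact 1 b 0 d (1,x1,y1,0))"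
  proof (rule span_eq[OF indep_Pinf])
    show "(0,0,0,1) \<in> span2 (gact 1 b 0 d (0,0,0,1)) (gact 1 b 0 d (1,x1,y1,0))"
      unfolding span2_iff g1 g2
      by (rule exI[of _ "1/d^3"], rule exI[of _ 0]) (use d in simp)
    show "(1, b + d*x1, b^2 + 2*b*d*x1 + d^2*y1, 0) \<in> span2 (gact 1 b 0 d (0,0,0,1)) (gact 1 b 0 d (1,x1,y1,0))"
      unfolding span2_iff g1 g2
      by (rule exI[of _ "-z/d^3"], rule exI[of _ 1]) (use d in simp)
  qed
  then show ?thesis by (simp add: img_span)
qed

lemma L7_line: assumes three: "(3::'a::field) \<noteq> 0" and r: "r \<noteq> 0" and xy: "x^2 - y = r^2"
  shows "span2 (0,0,0,1) (1,x,y::'a,0) \<in> L7"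
proof -
  have "polar {(y0,y1,y2,y3::'a). y0 = 0 \<and> y2 - y3 = 0} \<in> polar ` Gorbit {(y0,y1,y2,y3::'a). y0 = 0 \<and> y2 - y3 = 0}"
    by (rule Gorbit_id)
  then have m: "span2 (0,0,0,1) (1, 1/3, 0, 0) \<in> polar ` Gorbit {(y0,y1,y2,y3::'a). y0 = 0 \<and> y2 - y3 = 0}"
    using polar_L0[OF three] by simp
  define d where "d = 3*r"
  define b where "b = x - r"
  have d0: "d \<noteq> 0" using three r by (simp add: d_def)
  have "gact 1 b 0 d ` span2 (0,0,0,1) (1, 1/3, 0, 0) \<in> polar ` Gorbit {(y0,y1,y2,y3::'a). y0 = 0 \<and> y2 - y3 = 0}"
    by (rule Gorbit_polar_closed[OF m]) (use d0 in simp)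
  moreover have "gact 1 b 0 d ` span2 (0,0,0,1) (1, 1/3, 0, 0) = span2 (0,0,0,1) (1,x,y,0)"
  proof -
    have e1: "b + d*(1/3) = x" using three by (simp add: b_def d_def)
    have h: "2*b*d*(1/3) = 2*b*r" using three by (simp add: d_def)
    have "b^2 + 2*b*d*(1/3) + d^2*0 = b^2 + 2*b*r" by (simp only: h) simp
    also have "\<dots> = x^2 - r^2" by (simp add: b_def power2_eq_square algebra_simps)
    also have "\<dots> = y" using xy by (simp add: algebra_simps)
    finally have e2: "b^2 + 2*b*d*(1/3) + d^2*0 = y" .
    show ?thesis using stab[OF d0, of b "1/3" 0] unfolding e1 e2 .
  qed
  ultimately show ?thesis by (simp add: L7_def L4_def)
qed

lemma L8_line: assumes three: "(3::'a::field) \<noteq> 0" and u0: "u \<noteq> 0" and u1: "u \<noteq> 1"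
  and r: "r \<noteq> 0" and xy: "x^2 - y = (u^2-u+1)*r^2"
  shows "span2 (0,0,0,1) (1,x,y::'a,0) \<in> L8 u"
proof -
  define L5l where "L5l = {(y0,y1,y2,y3::'a). y3 - 3*u*y2 + 3*u^2*y1 - u^3*y0 = 0 \<and> y1 - y2 = 0}"
  have "polar L5l \<in> polar ` Gorbit L5l" by (rule Gorbit_id)
  then have m: "span2 (0,1,1,0) (1,0,u^2-u,u^3) \<in> polar ` Gorbit L5l"
    using polar_L5[OF three, of u] by (simp add: L5l_def)
  define F where "F = 3*u^2 - 3*u"
  have F0: "F \<noteq> 0"
  proof
    assume "F = 0"
    then have "3*(u*(u-1)) = 0" by (simp add: F_def algebra_simps power2_eq_square)
    then show False using three u0 u1 by simp
  qed
  have m1: "gact (-u) 1 1 0 ` span2 (0,1,1,0) (1,0,u^2-u,u^3) \<in> polar ` Gorbit L5l"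
    by (rule Gorbit_polar_closed[OF m]) simp
  have ga: "gact (-u) 1 1 0 (0,1,1,0) = (F, 1-2*u, 1, 0)"
    by (simp add: gact_simp F_def algebra_simps power2_eq_square)
  have gb: "gact (-u) 1 1 0 (1,0,u^2-u,u^3) = padd (psmult (-u) (F, 1-2*u, 1, 0)) (psmult 1 (0,0,0,1))"
    by (simp add: gact_simp F_def algebra_simps power2_eq_square power3_eq_cube)
  define x1 where "x1 = (1-2*u)/F"
  define y1 where "y1 = 1/F"
  have e1: "gact (-u) 1 1 0 ` span2 (0,1,1,0) (1,0,u^2-u,u^3) = span2 (0,0,0,1) (1,x1,y1,0)"
    unfolding img_span
  proof (rule span_eq[OF indep_Pinf, symmetric])
    show "(0,0,0,1) \<in> span2 (gact (-u) 1 1 0 (0,1,1,0)) (gact (-u) 1 1 0 (1,0,u^2-u,u^3))"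
      unfolding span2_iff gb
      by (rule exI[of _ u], rule exI[of _ 1]) (simp add: ga)
    show "(1,x1,y1,0) \<in> span2 (gact (-u) 1 1 0 (0,1,1,0)) (gact (-u) 1 1 0 (1,0,u^2-u,u^3))"
      unfolding span2_iff gb
      by (rule exI[of _ "1/F"], rule exI[of _ 0]) (use F0 in \<open>simp add: ga x1_def y1_def\<close>)
  qed
  define d where "d = r*F"
  define b where "b = x - r*(1-2*u)"
  have d0: "d \<noteq> 0" using F0 r by (simp add: d_def)
  have m2: "gact 1 b 0 d ` span2 (0,0,0,1) (1,x1,y1,0) \<in> polar ` Gorbit L5l"
    using Gorbit_polar_closed[OF m1[unfolded e1], of 1 d b 0] d0 by simp
  have h1: "d*x1 = r*(1-2*u)" "d*y1 = r" using F0 by (simp_all add: d_def x1_def y1_def)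
  have f1: "b + d*x1 = x" using h1 by (simp add: b_def)
  have "b^2 + 2*b*d*x1 + d^2*y1 = b^2 + 2*b*(r*(1-2*u)) + d*r"
  proof -
    have "2*b*d*x1 = 2*b*(d*x1)" "d^2*y1 = d*(d*y1)" by (simp_all add: power2_eq_square mult.assoc)
    then show ?thesis by (simp only: h1)
  qed
  also have "\<dots> = x^2 - (u^2-u+1)*r^2"
    by (simp add: b_def d_def F_def power2_eq_square algebra_simps)
  also have "\<dots> = y" using xy by (simp add: algebra_simps)
  finally have f2: "b^2 + 2*b*d*x1 + d^2*y1 = y" .
  have "gact 1 b 0 d ` span2 (0,0,0,1) (1,x1,y1,0) = span2 (0,0,0,1) (1,x,y,0)"
    using stab[OF d0, of b x1 y1] unfolding f1 f2 .
  then show ?thesis using m2 by (simp add: L8_def L5_def L5l_def)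
qed




lemma cpt_nz: "cpt t \<noteq> (0,0,0,0)"
  by (cases t) auto

lemma span_smult: "z \<in> span2 u v \<Longrightarrow> psmult k z \<in> span2 u v"
proof -
  assume "z \<in> span2 u v"
  then obtain s t where z: "z = padd (psmult s u) (psmult t v)" by (auto simp: span2_iff)
  have "psmult k z = padd (psmult (k*s) u) (psmult (k*t) v)"
    unfolding z by (cases u; cases v) (simp add: algebra_simps)
  then show ?thesis unfolding span2_iff by blast
qed

lemma line_through: assumes "is_line l" "p \<in> l" "p \<noteq> (0,0,0,0)"
  shows "\<exists>w. indep2 p w \<and> l = span2 p w"
proof -
  obtain u v where uv: "indep2 u v" "l = span2 u v" using assms(1) by (auto simp: is_line_def)
  obtain a b where p: "p = padd (psmult a u) (psmult b v)" using assms(2) uv by (auto simp: span2_iff)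
  show ?thesis
  proof (cases "a = 0")
    case False
    have ind: "indep2 p v" unfolding indep2_def
    proof (intro allI impI)
      fix s t assume "padd (psmult s p) (psmult t v) = (0,0,0,0)"
      then have "padd (psmult (s*a + t*0) u) (psmult (s*b + t*1) v) = (0,0,0,0)"
        unfolding p using comb_comb[of s a u b v t 0 1] comb_one by metis
      then have "s*a + t*0 = 0 \<and> s*b + t*1 = 0" using uv(1) unfolding indep2_def by blast
      then show "s = 0 \<and> t = 0" using False by auto
    qed
    have "span2 p v = span2 u v"
      by (rule span_eq[OF ind]) (use assms(2) uv in \<open>simp_all add: mem_span_right\<close>)
    then show ?thesis using ind uv by metis
  next
    case True
    then have "p = psmult b v" unfolding p by (cases u; cases v) simp
    then have b0: "b \<noteq> 0" using assms(3) by (cases v) auto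
    have ind: "indep2 p u" unfolding indep2_def
    proof (intro allI impI)
      fix s t assume "padd (psmult s p) (psmult t u) = (0,0,0,0)"
      then have "padd (psmult (s*0 + t*1) u) (psmult (s*b + t*0) v) = (0,0,0,0)"
        unfolding p True using comb_comb[of s 0 u b v t 1 0] comb_one by metis
      then have "s*0 + t*1 = 0 \<and> s*b + t*0 = 0" using uv(1) unfolding indep2_def by blast
      then show "s = 0 \<and> t = 0" using b0 by auto
    qed
    have "span2 p u = span2 u v"
      by (rule span_eq[OF ind]) (use assms(2) uv in \<open>simp_all add: mem_span_left\<close>)
    then show ?thesis using ind uv by metis
  qed
qed

lemma cpt_indep: assumes "s \<noteq> t" shows "indep2 (cpt s) (cpt t)"
proof (cases s; cases t)
  fix a b assume st: "s = Some a" "t = Some b"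
  show ?thesis unfolding indep2_def st
  proof (intro allI impI)
    fix x y assume "padd (psmult x (cpt (Some a))) (psmult y (cpt (Some b))) = (0,0,0,0)"
    then have h: "x + y = 0" "x*a + y*b = 0" by auto
    have y: "y = -x" using h(1) by (simp add: eq_neg_iff_add_eq_0 add.commute)
    have "x*(a-b) = 0" using h(2) unfolding y by (simp add: algebra_simps)
    moreover have "a - b \<noteq> 0" using assms st by auto
    ultimately show "x = 0 \<and> y = 0" using y by auto
  qed
qed (use assms in \<open>auto simp: indep2_def\<close>)

lemma L6_lemma: assumes "is_line l" "cpt s \<in> l" "cpt t \<in> l" "s \<noteq> t" shows "l \<in> L6"
proof -
  obtain u v where uv: "indep2 u v" "l = span2 u v" using assms(1) by (auto simp: is_line_def)
  have "span2 (cpt s) (cpt t) = l" using span_eq[OF cpt_indep[OF assms(4)]] assms uv by simp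
  then show ?thesis using assms(4) unfolding L6_def by blast
qed

lemma osc_unique: assumes "cpt s \<in> plane_of (osc_coef t)" shows "s = t"
proof (cases s; cases t)
  fix a b assume st: "s = Some a" "t = Some b"
  then have "-(b^3) + 3*b^2*a - 3*b*a^2 + a^3 = 0" using assms by (simp add: plane_of_def)
  then have "(a-b)^3 = 0" by (simp add: power3_eq_cube power2_eq_square algebra_simps)
  then show ?thesis using st by simp
qed (use assms in \<open>auto simp: plane_of_def\<close>)

lemma cpt_in_tangent: "cpt s \<in> tangent_line s"
  by (cases s) (simp_all add: mem_span_left)

lemma L3_lemma: assumes "is_line l" "cpt t0 \<in> l" "l \<subseteq> plane_of (osc_coef t0)" "l \<noteq> tangent_line t0"
  shows "l \<in> L3"
proof -
  have S: "{t. cpt t \<in> l} = {t0}" using assms(2,3) osc_unique by blast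
  have "l \<notin> L2"
  proof
    assume "l \<in> L2"
    then obtain s where s: "l = tangent_line s" by (auto simp: L2_def)
    then have "cpt s \<in> l" using cpt_in_tangent by simp
    then have "s = t0" using assms(3) osc_unique by blast
    then show False using s assms(4) by simp
  qed
  then show ?thesis unfolding L3_def using assms S by auto
qed




lemma nonsq_prod:
  fixes a b :: "'a::{finite,field}"
  assumes two: "(2::'a) \<noteq> 0" and na: "\<not>(\<exists>w. w^2 = a)" and nb: "\<not>(\<exists>w. w^2 = b)"
  shows "\<exists>w. w^2 = a*b"
proof -
  define U where "U = (UNIV::'a set) - {0}"
  define S where "S = (\<lambda>x. x^2) ` U"
  define F where "F s = {x\<in>U. x^2 = s}" for s
  have fU: "finite U" "finite S" by (auto simp: U_def S_def)
  have UF: "U = \<Union>(F ` S)" by (auto simp: U_def S_def F_def)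
  have cF: "card (F s) = 2" if "s \<in> S" for s
  proof -
    obtain v where v: "v \<in> U" "s = v^2" using \<open>s\<in>S\<close> by (auto simp: S_def)
    have "F s = {v, -v}"
    proof
      show "F s \<subseteq> {v, -v}"
      proof
        fix x assume "x \<in> F s"
        then have "x^2 = v^2" using v by (auto simp: F_def)
        then have "(x - v) * (x + v) = 0" by (simp add: algebra_simps power2_eq_square)
        then show "x \<in> {v,-v}" by (auto simp: eq_neg_iff_add_eq_0)
      qed
      show "{v,-v} \<subseteq> F s" using v by (auto simp: F_def U_def)
    qed
    moreover have "v \<noteq> -v"
    proof
      assume "v = -v" then have "2*v = 0" by (metis mult_2 add.right_inverse)
      then show False using two v by (auto simp: U_def)
    qed
    ultimately show ?thesis by simp
  qed
  have "card U = (\<Sum>s\<in>S. card (F s))"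
    unfolding UF by (rule card_UN_disjoint) (auto simp: fU F_def finite_subset[OF _ fU(1)])
  also have "\<dots> = 2 * card S" using cF by simp
  finally have cU: "card U = 2 * card S" .
  define N where "N = U - S"
  have SU: "S \<subseteq> U" by (auto simp: S_def U_def)
  have cN: "card N = card S" unfolding N_def using cU SU fU by (simp add: card_Diff_subset)
  have a0: "a \<noteq> 0" using na by (metis zero_power2)
  have b0: "b \<noteq> 0" using nb by (metis zero_power2)
  have sub: "(\<lambda>s. a*s) ` S \<subseteq> N"
  proof
    fix y assume "y \<in> (\<lambda>s. a*s) ` S"
    then obtain v where v: "v \<in> U" "y = a * v^2" by (auto simp: S_def)
    have v0: "v \<noteq> 0" using v by (auto simp: U_def)
    have "y \<notin> S"
    proof
      assume "y \<in> S"
      then obtain w where "y = w^2" by (auto simp: S_def)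
      then have "(w/v)^2 = a" using v v0 by (auto simp: power_divide field_simps)
      then show False using na by blast
    qed
    moreover have "y \<noteq> 0" using v v0 a0 by simp
    ultimately show "y \<in> N" by (auto simp: N_def U_def)
  qed
  have "card ((\<lambda>s. a*s) ` S) = card S" using a0 by (intro card_image) (auto simp: inj_on_def)
  then have eq: "(\<lambda>s. a*s) ` S = N" using sub cN fU by (intro card_subset_eq) (auto simp: N_def)
  have "b \<in> N" using nb b0 by (auto simp: N_def U_def S_def)
  then obtain v where "b = a * v^2" using eq by (auto simp: S_def)
  then have "(a*v)^2 = a*b" by (simp add: power2_eq_square algebra_simps)
  then show ?thesis by blast
qed


lemma none_case:
  fixes u :: "'a::{finite,field}" and l :: "'a pt set"
  assumes two: "(2::'a) \<noteq> 0" and three: "(3::'a) \<noteq> 0"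
    and nu: "\<not> (\<exists>w. w^2 = u^2 - u + 1)"
    and line: "is_line l" and P: "cpt None \<in> l"
    and np: "\<not> l \<subseteq> plane_of (osc_coef None)"
    and noS: "\<forall>x. cpt (Some x) \<notin> l"
  shows "l \<in> L7 \<union> L8 u"
proof -
  obtain w where w: "indep2 (0,0,0,1) w" "l = span2 (0,0,0,1) w"
    using line_through[OF line P] cpt_nz[of None] by auto
  obtain w0 w1 w2 w3 where ww: "w = (w0,w1,w2,w3)" by (cases w) auto
  have w0: "w0 \<noteq> 0"
  proof
    assume w00: "w0 = 0"
    have "l \<subseteq> plane_of (osc_coef None)"
    proof
      fix z assume "z \<in> l"
      then obtain s t where "z = padd (psmult s (0,0,0,1)) (psmult t w)" using w by (auto simp: span2_iff)
      then show "z \<in> plane_of (osc_coef None)" using w00 by (simp add: ww plane_of_def)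
    qed
    then show False using np by blast
  qed
  define x where "x = w1/w0"
  define y where "y = w2/w0"
  have l: "l = span2 (0,0,0,1) (1,x,y,0)"
  proof -
    have "span2 (0,0,0,1) (1,x,y,0) = span2 (0,0,0,1) w"
    proof (rule span_eq[OF indep_Pinf])
      show "(0,0,0,1) \<in> span2 (0,0,0,1) w" by (rule mem_span_left)
      have "(1,x,y,0) = padd (psmult (-w3/w0) (0,0,0,1)) (psmult (1/w0) w)"
        using w0 by (simp add: ww x_def y_def)
      then show "(1,x,y,0) \<in> span2 (0,0,0,1) w" unfolding span2_iff by blast
    qed
    then show ?thesis using w by simp
  qed
  have ne: "x^2 - y \<noteq> 0"
  proof
    assume "x^2 - y = 0"
    then have "cpt (Some x) = padd (psmult (x^3) (0,0,0,1)) (psmult 1 (1,x,y,0))" by simp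
    then have "cpt (Some x) \<in> l" unfolding l span2_iff by blast
    then show False using noS by blast
  qed
  show ?thesis
  proof (cases "\<exists>r. r^2 = x^2 - y")
    case True
    then obtain r where r: "r^2 = x^2 - y" by blast
    then have "r \<noteq> 0" using ne by auto
    then have "l \<in> L7" unfolding l using L7_line[OF three _ r[symmetric]] by simp
    then show ?thesis by simp
  next
    case False
    define K where "K = u^2 - u + 1"
    obtain v where v: "v^2 = (x^2 - y) * K" using nonsq_prod[OF two False] nu by (auto simp: K_def)
    have K0: "K \<noteq> 0" using nu K_def by (metis zero_power2)
    have u0: "u \<noteq> 0" using nu by (metis power_one diff_self add_0 zero_power2 diff_zero)
    have u1: "u \<noteq> 1" using nu by (metis power_one diff_self add_0)
    define r where "r = v/K"
    have "(u^2-u+1)*r^2 = K * (v/K)^2" by (simp add: K_def r_def)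
    also have "\<dots> = v^2 / K" using K0 by (simp add: power_divide power2_eq_square)
    also have "\<dots> = x^2 - y" using K0 v by simp
    finally have rr: "x^2 - y = (u^2-u+1)*r^2" by simp
    have "r \<noteq> 0" using rr ne by auto
    then have "l \<in> L8 u" unfolding l using L8_line[OF three u0 u1 _ rr] by simp
    then show ?thesis by simp
  qed
qed




lemma gact_zero: "gact a b c d (0,0,0,0) = (0,0,0,0)"
  by (simp add: gact_simp)

lemma gact_inj0: assumes "a*d-b*c \<noteq> 0" "gact a b c d x = (0,0,0,0)" shows "x = (0,0,0,0)"
proof -
  have "gact d (-b) (-c) a (gact a b c d x) = gact (a*d-b*c) 0 0 (a*d-b*c) x"
    unfolding gact_comp by (simp add: algebra_simps)
  also have "\<dots> = psmult ((a*d-b*c)^3) x" by (rule gact_scal)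
  finally have "psmult ((a*d-b*c)^3) x = (0,0,0,0)" using assms(2) gact_zero by metis
  then show ?thesis using assms(1) by (cases x) simp
qed

lemma is_line_img: assumes "a*d-b*c \<noteq> 0" "is_line l" shows "is_line (gact a b c d ` l)"
proof -
  obtain u v where uv: "indep2 u v" "l = span2 u v" using assms(2) by (auto simp: is_line_def)
  have "indep2 (gact a b c d u) (gact a b c d v)" unfolding indep2_def
  proof (intro allI impI)
    fix s t assume "padd (psmult s (gact a b c d u)) (psmult t (gact a b c d v)) = (0,0,0,0)"
    then have "gact a b c d (padd (psmult s u) (psmult t v)) = (0,0,0,0)" by (simp add: gact_lin)
    then have "padd (psmult s u) (psmult t v) = (0,0,0,0)" using gact_inj0[OF assms(1)] by blast
    then show "s = 0 \<and> t = 0" using uv(1) unfolding indep2_def by blast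
  qed
  then show ?thesis unfolding is_line_def uv(2) img_span by blast
qed

lemma JJ: "gact 0 1 1 0 (gact 0 1 1 0 y) = y"
  by (cases y) (simp add: gact_simp)

lemma TT: "gact 1 t 0 1 (gact 1 (-t) 0 1 y) = y"
  using gact_comp[of 1 t 0 1 1 "-t" 0 1 y] gact_id by simp

lemma T_cpt: "gact 1 t 0 1 (cpt (Some s)) = cpt (Some (s+t))"
  by (simp add: gact_simp power2_eq_square power3_eq_cube algebra_simps)

lemma some_case:
  fixes u :: "'a::{finite,field}" and l :: "'a pt set"
  assumes two: "(2::'a) \<noteq> 0" and three: "(3::'a) \<noteq> 0"
    and nu: "\<not> (\<exists>w. w^2 = u^2 - u + 1)"
    and line: "is_line l" and P: "cpt (Some t) \<in> l"
    and np: "\<not> l \<subseteq> plane_of (osc_coef (Some t))"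
    and noS: "\<forall>s. s \<noteq> Some t \<longrightarrow> cpt s \<notin> l"
  shows "l \<in> L7 \<union> L8 u"
proof -
  define l' where "l' = gact 0 1 1 0 ` gact 1 (-t) 0 1 ` l"
  have lback: "l = gact 1 t 0 1 ` gact 0 1 1 0 ` l'"
    unfolding l'_def image_image JJ TT by simp
  have line': "is_line l'" unfolding l'_def
    by (rule is_line_img, simp, rule is_line_img, simp, rule line)
  have "gact 0 1 1 0 (gact 1 (-t) 0 1 (cpt (Some t))) = cpt None"
    by (simp add: gact_simp power2_eq_square power3_eq_cube algebra_simps)
  then have P': "cpt None \<in> l'" unfolding l'_def using P by (metis image_eqI)
  have np': "\<not> l' \<subseteq> plane_of (osc_coef None)"
  proof
    assume sub: "l' \<subseteq> plane_of (osc_coef None)"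
    obtain y where y: "y \<in> l" "y \<notin> plane_of (osc_coef (Some t))" using np by blast
    obtain y0 y1 y2 y3 where yy: "y = (y0,y1,y2,y3)" by (cases y) auto
    have "gact 0 1 1 0 (gact 1 (-t) 0 1 y) \<in> l'" unfolding l'_def using y by blast
    then have "gact 0 1 1 0 (gact 1 (-t) 0 1 y) \<in> plane_of (osc_coef None)" using sub by blast
    then have "- (t^3) * y0 + 3*t^2*y1 + -(3*t)*y2 + y3 = 0"
      by (simp add: yy gact_simp plane_of_def power2_eq_square power3_eq_cube algebra_simps)
    then show False using y(2) by (simp add: yy plane_of_def)
  qed
  have noS': "\<forall>x. cpt (Some x) \<notin> l'"
  proof (intro allI notI)
    fix x assume "cpt (Some x) \<in> l'"
    then obtain y where y: "y \<in> l" "cpt (Some x) = gact 0 1 1 0 (gact 1 (-t) 0 1 y)"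
      unfolding l'_def by blast
    have yx: "y = gact 1 t 0 1 (gact 0 1 1 0 (cpt (Some x)))" unfolding y(2) JJ TT ..
    show False
    proof (cases "x = 0")
      case True
      then have "y = cpt None" unfolding yx by (simp add: gact_simp)
      then show False using y noS by auto
    next
      case False
      have gJ: "gact 0 1 1 0 (cpt (Some x)) = psmult (x^3) (cpt (Some (1/x)))"
        using False by (simp add: gact_simp power2_eq_square power3_eq_cube field_simps)
      have "y = psmult (x^3) (cpt (Some (1/x + t)))" unfolding yx gJ gact_smult T_cpt ..
      then have "psmult (1/x^3) y = cpt (Some (1/x+t))" using False
        by (simp add: smult_smult smult_one)
      moreover have "psmult (1/x^3) y \<in> l"
        using y(1) line span_smult unfolding is_line_def by blast
      ultimately have "cpt (Some (1/x+t)) \<in> l" by simp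
      moreover have "Some (1/x+t) \<noteq> Some t" using False by simp
      ultimately show False using noS by blast
    qed
  qed
  have "l' \<in> L7 \<union> L8 u" by (rule none_case[OF two three nu line' P' np' noS'])
  then show ?thesis
  proof
    assume "l' \<in> L7"
    then have "gact 0 1 1 0 ` l' \<in> L7" unfolding L7_def L4_def by (rule Gorbit_polar_closed) simp
    then have "gact 1 t 0 1 ` gact 0 1 1 0 ` l' \<in> L7" unfolding L7_def L4_def by (rule Gorbit_polar_closed) simp
    then show ?thesis using lback by simp
  next
    assume "l' \<in> L8 u"
    then have "gact 0 1 1 0 ` l' \<in> L8 u" unfolding L8_def L5_def by (rule Gorbit_polar_closed) simp
    then have "gact 1 t 0 1 ` gact 0 1 1 0 ` l' \<in> L8 u" unfolding L8_def L5_def by (rule Gorbit_polar_closed) simp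
    then show ?thesis using lback by simp
  qed
qed

theorem mainTheorem13:
  fixes u :: "'a::{finite,field}" and l :: "'a pt set"
  assumes "(2::'a) \<noteq> 0" and "(3::'a) \<noteq> 0"
    and "\<not> (\<exists>w. w^2 = u^2 - u + 1)"
    and "is_line l"
    and "\<exists>t. cpt t \<in> l"
  shows "l \<in> L2 \<union> L3 \<union> L6 \<union> L7 \<union> L8 u"
proof -
  obtain t0 where t0: "cpt t0 \<in> l" using assms(5) by blast
  show ?thesis
  proof (cases "l = tangent_line t0")
    case True then show ?thesis by (simp add: L2_def)
  next
    case nt: False
    show ?thesis
    proof (cases "l \<subseteq> plane_of (osc_coef t0)")
      case True then show ?thesis using L3_lemma[OF assms(4) t0 True nt] by simp
    next
      case np: False
      show ?thesis
      proof (cases "\<exists>s. s \<noteq> t0 \<and> cpt s \<in> l")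
        case True
        then obtain s where "s \<noteq> t0" "cpt s \<in> l" by blast
        then show ?thesis using L6_lemma[OF assms(4) _ t0] by blast
      next
        case False
        then have noS: "\<forall>s. s \<noteq> t0 \<longrightarrow> cpt s \<notin> l" by blast
        have "l \<in> L7 \<union> L8 u"
        proof (cases t0)
          case None
          show ?thesis
            by (rule none_case[OF assms(1-4)]) (use t0 np noS None in auto)
        next
          case (Some t)
          show ?thesis
            by (rule some_case[OF assms(1-4)]) (use t0 np noS Some in auto)
        qed
        then show ?thesis by blast
      qed
    qed
  qed
qed


end
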